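(* Let $\mu$ be a Borel probability measure on $\mathbb{R}$ with compact support such that ${\rm supp}(\mu)$ has a finite number $n$ of connected components. Then for every $\varepsilon>0$ there exist real-valued $x,y\in L^\infty(0,1)$ (with respect to Lebesgue measure on $(0,1)$) such that: (1) $\|x-y\|_\infty<\varepsilon$; (2) the distribution of $x$ is $\mu$; (3) the distribution $\nu$ of $y$ is supported on a union of $n$ pairwise disjoint intervals $[a_j,b_j]$, $j=1,\dots,n$, $\nu$ is absolutely continuous, and its density $\rho$ satisfies \[c_j\sqrt{(t-a_j)(b_j-t)}\le\rho(t)\le C_j\sqrt{(t-a_j)(b_j-t)},\quad t\in[a_j,b_j],\] for some constants $c_j,C_j>0$.
   Context: The distribution of a measurable function $f$ on $(0,1)$ is the pushforward of Lebesgue measure on $(0,1)$ under $f$. *)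

theory Defs
  imports "HOL-Probability.Probability"
begin

definition measure_support :: "'a::topological_space measure \<Rightarrow> 'a set" where
  "measure_support M = {t. \<forall>U. open U \<longrightarrow> t \<in> U \<longrightarrow> emeasure M U > 0}"

definition Linfty01 :: "(real \<Rightarrow> real) set" where
  "Linfty01 = {f. f \<in> borel_measurable (lebesgue_on {0<..<1}) \<and>
                  (\<exists>B. AE t in lebesgue_on {0<..<1}. \<bar>f t\<bar> \<le> B)}"

end

theory Submission
  imports Defs
begin


definition quant :: "(real \<Rightarrow> real) \<Rightarrow> real \<Rightarrow> real" where
  "quant F t = Inf {s. t \<le> F s}"

locale cdf_like =
  fixes F :: "real \<Rightarrow> real"
  assumes mono: "\<And>x y. x \<le> y \<Longrightarrow> F x \<le> F y"
    and rc: "\<And>a. continuous (at_right a) F"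
    and bot: "(F \<longlongrightarrow> 0) at_bot"
    and top: "(F \<longlongrightarrow> 1) at_top"
begin

lemma quant_le_iff:
  assumes t: "0 < t" "t < 1"
  shows "quant F t \<le> s \<longleftrightarrow> t \<le> F s"
proof -
  have "\<forall>\<^sub>F x in at_bot. F x < t" using order_tendstoD(2)[OF bot t(1)] .
  then obtain s0 where s0: "\<And>x. x \<le> s0 \<Longrightarrow> F x < t" by (auto simp: eventually_at_bot_linorder)
  have bdd: "bdd_below {s. t \<le> F s}"
    by (rule bdd_belowI[of _ s0]) (metis s0 linorder_not_le mem_Collect_eq less_le_not_le nle_le)
  have "\<forall>\<^sub>F x in at_top. F x > t" using order_tendstoD(1)[OF top t(2)] .
  then obtain s1 where s1: "\<And>x. x \<ge> s1 \<Longrightarrow> F x > t" by (auto simp: eventually_at_top_linorder)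
  have ne: "{s. t \<le> F s} \<noteq> {}" using s1[of s1] by (auto intro: less_imp_le)
  show ?thesis
  proof
    assume q: "quant F t \<le> s"
    define q where "q = quant F t"
    have "\<forall>\<^sub>F x in at_right q. t \<le> F x"
    proof -
      have "\<forall>\<^sub>F x in at_right q. q < x" by (rule eventually_at_right_less)
      moreover have "t \<le> F x" if "q < x" for x
      proof -
        have "Inf {s. t \<le> F s} < x" using \<open>q < x\<close> unfolding q_def quant_def .
        then obtain e where "e \<in> {s. t \<le> F s}" "e < x"
          using cInf_less_iff[OF ne bdd] by auto
        then show ?thesis using mono[of e x] by auto
      qed
      ultimately show ?thesis by (auto elim: eventually_mono)
    qed
    then have "t \<le> F q"
      using rc[of q] by (intro tendsto_lowerbound[of F "F q" "at_right q"]) (auto simp: continuous_within)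
    then show "t \<le> F s" using mono[OF q] unfolding q_def by auto
  next
    assume "t \<le> F s"
    then show "quant F t \<le> s" unfolding quant_def by (intro cInf_lower bdd) auto
  qed
qed

end




lemma lebesgue_Ioo_01: "emeasure lebesgue {0<..<1::real} = 1"
  by simp

lemma prob_L01: "prob_space (lebesgue_on {0<..<1::real})"
  by (rule prob_space_restrict_space) auto

lemma measure_L01_le: assumes "0 \<le> c" "c \<le> 1"
  shows "measure (lebesgue_on {0<..<1::real}) ({0<..<1} \<inter> {..c}) = c"
proof (cases "c < 1")
  case True
  then have "{0<..<1} \<inter> {..c} = {0<..c}" by auto
  have "measure (lebesgue_on {0<..<1}) {0<..c} = measure lebesgue {0<..c}"
    by (rule measure_restrict_space) (use True in auto)
  also have "measure lebesgue {0<..c} = c" using assms by simp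
  finally show ?thesis using \<open>{0<..<1} \<inter> {..c} = {0<..c}\<close> by simp
next
  case False
  then have "{0<..<1} \<inter> {..c} = {0<..<1::real}" using assms by auto
  have "measure (lebesgue_on {0<..<1}) {0<..<1::real} = 1"
    by (metis prob_L01 prob_space.prob_space space_lebesgue_on)
  then show ?thesis using \<open>{0<..<1} \<inter> {..c} = {0<..<1}\<close> False assms by simp
qed

lemma real_distribution_cdf_like: "real_distribution M \<Longrightarrow> cdf_like (cdf M)"
  unfolding cdf_like_def
  using finite_borel_measure.cdf_nondecreasing finite_borel_measure.cdf_is_right_cont
    finite_borel_measure.cdf_lim_at_bot real_distribution.cdf_lim_at_top_prob
    real_distribution.finite_borel_measure_M by blast

lemma quant_preimage:
  assumes "cdf_like F"
  shows "{t \<in> {0<..<1}. quant F t \<le> s} = {0<..<1} \<inter> {..F s}"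
  using cdf_like.quant_le_iff[OF assms] by auto

lemma quant_meas:
  assumes "cdf_like F"
  shows "quant F \<in> borel_measurable (lebesgue_on {0<..<1})"
proof (subst borel_measurable_iff_le, intro allI)
  fix s
  have "{w \<in> space (lebesgue_on {0<..<1}). quant F w \<le> s} = {0<..<1} \<inter> {..F s}"
    using quant_preimage[OF assms] by simp
  also have "\<dots> \<in> sets (lebesgue_on {0<..<1})"
    by (subst sets_restrict_space_iff) auto
  finally show "{w \<in> space (lebesgue_on {0<..<1}). quant F w \<le> s} \<in> sets (lebesgue_on {0<..<1})" .
qed

lemma quant_distr:
  assumes M: "real_distribution M"
  shows "distr (lebesgue_on {0<..<1}) borel (quant (cdf M)) = M"
proof -
  note F = real_distribution_cdf_like[OF M]
  note meas = quant_meas[OF F]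
  interpret P: prob_space "lebesgue_on {0<..<1::real}" by (rule prob_L01)
  have RD: "real_distribution (distr (lebesgue_on {0<..<1}) borel (quant (cdf M)))"
    using meas by simp
  show ?thesis
  proof (rule cdf_unique[OF RD M], rule ext)
    fix s
    have "cdf (distr (lebesgue_on {0<..<1}) borel (quant (cdf M))) s
       = measure (distr (lebesgue_on {0<..<1}) borel (quant (cdf M))) {..s}"
      by (simp add: cdf_def)
    also have "\<dots> = measure (lebesgue_on {0<..<1}) (quant (cdf M) -` {..s} \<inter> space (lebesgue_on {0<..<1}))"
      by (rule measure_distr[OF meas]) simp
    also have "space (lebesgue_on {0<..<1::real}) = {0<..<1}" by simp
    also have "quant (cdf M) -` {..s} \<inter> {0<..<1} = {0<..<1} \<inter> {..cdf M s}"
    proof -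
      have "quant (cdf M) -` {..s} \<inter> {0<..<1} = {t \<in> {0<..<1}. quant (cdf M) t \<le> s}" by blast
      then show ?thesis using quant_preimage[OF F, of s] by simp
    qed
    also have "measure (lebesgue_on {0<..<1}) \<dots> = cdf M s"
      by (rule measure_L01_le) (use M in \<open>auto simp: finite_borel_measure.cdf_nonneg real_distribution.finite_borel_measure_M real_distribution.cdf_bounded_prob\<close>)
    finally show "cdf (distr (lebesgue_on {0<..<1}) borel (quant (cdf M))) s = cdf M s" .
  qed
qed

lemma quant_close:
  assumes F: "cdf_like F" and G: "cdf_like G" and e: "0 \<le> e"
    and lev: "\<And>s. F (s - e) \<le> G s" "\<And>s. G s \<le> F (s + e)"
    and t: "0 < t" "t < 1"
  shows "\<bar>quant F t - quant G t\<bar> \<le> e"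
proof -
  note qF = cdf_like.quant_le_iff[OF F t] and qG = cdf_like.quant_le_iff[OF G t]
  have "t \<le> G (quant G t)" using qG[of "quant G t"] by simp
  also have "\<dots> \<le> F (quant G t + e)" by (rule lev(2))
  finally have 1: "quant F t \<le> quant G t + e" using qF by simp
  have "t \<le> F (quant F t)" using qF[of "quant F t"] by simp
  also have "\<dots> \<le> G (quant F t + e)" using lev(1)[of "quant F t + e"] by simp
  finally have 2: "quant G t \<le> quant F t + e" using qG by simp
  show ?thesis using 1 2 by linarith
qed




lemma aux1: "(y::real) > 0 \<Longrightarrow> 2/3 * (of_nat 3 * ((inverse y / 2 * 1) * y ^ (3 - Suc 0))) = y"
  by (simp add: power2_eq_square field_simps)
lemma aux2: "(y::real) > 0 \<Longrightarrow> - (2/3 * (of_nat 3 * ((inverse y / 2 * -1) * y ^ (3 - Suc 0)))) = y"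
  by (simp add: power2_eq_square field_simps)

lemma sqrt_deriv:
  assumes "x > u"
  shows "((\<lambda>t. 2/3 * sqrt (t - u) ^ 3) has_real_derivative sqrt (x - u)) (at x)"
proof -
  have d0: "DERIV (\<lambda>t. t - u) x :> 1" using DERIV_diff[OF DERIV_ident DERIV_const] by simp
  have d1: "DERIV (\<lambda>t. sqrt (t - u)) x :> inverse (sqrt (x - u)) / 2 * 1"
    using DERIV_chain2[OF DERIV_real_sqrt[of "x - u"] d0] assms by simp
  have d2: "DERIV (\<lambda>t. 2/3 * sqrt (t - u) ^ 3) x :> 2/3 * (of_nat 3 * ((inverse (sqrt (x - u)) / 2 * 1) * sqrt (x - u) ^ (3 - Suc 0)))"
    by (intro DERIV_cmult DERIV_power d1)
  moreover have "2/3 * (of_nat 3 * ((inverse (sqrt (x - u)) / 2 * 1) * sqrt (x - u) ^ (3 - Suc 0))) = sqrt (x - u)"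
    using assms aux1[of "sqrt (x - u)"] by simp
  ultimately show ?thesis by simp
qed

lemma sqrt_deriv2:
  assumes "x < v"
  shows "((\<lambda>t. - (2/3 * sqrt (v - t) ^ 3)) has_real_derivative sqrt (v - x)) (at x)"
proof -
  have d0: "DERIV (\<lambda>t. v - t) x :> -1" using DERIV_diff[OF DERIV_const DERIV_ident] by simp
  have d1: "DERIV (\<lambda>t. sqrt (v - t)) x :> inverse (sqrt (v - x)) / 2 * -1"
    using DERIV_chain2[OF DERIV_real_sqrt[of "v - x"] d0] assms by simp
  have d2: "DERIV (\<lambda>t. - (2/3 * sqrt (v - t) ^ 3)) x :> - (2/3 * (of_nat 3 * ((inverse (sqrt (v - x)) / 2 * -1) * sqrt (v - x) ^ (3 - Suc 0))))"
    by (intro DERIV_minus DERIV_cmult DERIV_power d1)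
  moreover have "- (2/3 * (of_nat 3 * ((inverse (sqrt (v - x)) / 2 * -1) * sqrt (v - x) ^ (3 - Suc 0)))) = sqrt (v - x)"
    using assms aux2[of "sqrt (v - x)"] by simp
  ultimately show ?thesis by simp
qed

lemma sqrt_has_integral:
  assumes "u \<le> v"
  shows "((\<lambda>t. sqrt (t - u)) has_integral (2/3 * sqrt (v - u) ^ 3)) {u..v}"
proof -
  have "((\<lambda>t. sqrt (t - u)) has_integral ((\<lambda>t. 2/3 * sqrt (t - u) ^ 3) v - (\<lambda>t. 2/3 * sqrt (t - u) ^ 3) u)) {u..v}"
    using assms sqrt_deriv
    by (intro fundamental_theorem_of_calculus_interior)
       (auto intro!: continuous_intros simp: has_real_derivative_iff_has_vector_derivative[symmetric])
  then show ?thesis by simp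
qed

lemma sqrt_has_integral2:
  assumes "u \<le> v"
  shows "((\<lambda>t. sqrt (v - t)) has_integral (2/3 * sqrt (v - u) ^ 3)) {u..v}"
proof -
  have "((\<lambda>t. sqrt (v - t)) has_integral ((\<lambda>t. - (2/3 * sqrt (v - t) ^ 3)) v - (\<lambda>t. - (2/3 * sqrt (v - t) ^ 3)) u)) {u..v}"
    using assms sqrt_deriv2
    by (intro fundamental_theorem_of_calculus_interior)
       (auto intro!: continuous_intros simp: has_real_derivative_iff_has_vector_derivative[symmetric])
  then show ?thesis by simp
qed

lemma edge_bound:
  fixes x y h c :: real
  assumes "0 \<le> x" "h \<le> y" "y \<le> K" "h > 0" "c > 0"
  shows "(c / sqrt K) * (sqrt x * sqrt y) \<le> c * sqrt x"
    and "c * sqrt x \<le> (c / sqrt h) * (sqrt x * sqrt y)"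
proof -
  have K: "K > 0" using assms by linarith
  have "sqrt y \<le> sqrt K" using assms by simp
  then have "sqrt y / sqrt K \<le> 1" using K by simp
  then have "(c * sqrt x) * (sqrt y / sqrt K) \<le> (c * sqrt x) * 1"
    using assms by (intro mult_left_mono) auto
  then show "(c / sqrt K) * (sqrt x * sqrt y) \<le> c * sqrt x" by (simp add: field_simps)
  have "sqrt h \<le> sqrt y" using assms by simp
  then have "1 \<le> sqrt y / sqrt h" using assms by simp
  then have "(c * sqrt x) * 1 \<le> (c * sqrt x) * (sqrt y / sqrt h)"
    using assms by (intro mult_left_mono) auto
  then show "c * sqrt x \<le> (c / sqrt h) * (sqrt x * sqrt y)" by (simp add: field_simps)
qed

locale grid =
  fixes a h :: real and N :: nat and m :: "nat \<Rightarrow> real"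
  assumes h: "h > 0" and N: "N \<ge> 2" and mpos: "\<And>k. k < N \<Longrightarrow> m k > 0"
begin

definition "b = a + N * h"
definition "cc = 3 / (2 * h * sqrt h)"
definition "cell (k::nat) = {a + real k * h .. a + real (k + 1) * h}"
definition "sh k t = (if k = 0 then cc * sqrt (t - a) else if k = N - 1 then cc * sqrt (b - t) else 1 / h)"
definition "phi k t = indicator (cell k) t * sh k t"
definition "rho t = (\<Sum>k<N. m k * phi k t)"

lemma cc_pos: "cc > 0" using h by (simp add: cc_def)

lemma sh_nonneg: "t \<in> cell k \<Longrightarrow> k < N \<Longrightarrow> sh k t \<ge> 0"
  using h cc_pos N by (auto simp: sh_def cell_def b_def algebra_simps intro!: mult_nonneg_nonneg)

lemma phi_nonneg: "k < N \<Longrightarrow> phi k t \<ge> 0"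
  using sh_nonneg by (auto simp: phi_def indicator_def)

lemma rho_nonneg: "rho t \<ge> 0"
  unfolding rho_def by (rule sum_nonneg) (simp add: mpos phi_nonneg less_imp_le)

lemma phi_meas[measurable]: "phi k \<in> borel_measurable borel"
  unfolding phi_def sh_def cell_def by measurable

lemma rho_meas[measurable]: "rho \<in> borel_measurable borel"
  unfolding rho_def by measurable

lemma sqrt_h3: "sqrt h ^ 3 = h * sqrt h"
  using h by (simp add: power3_eq_cube)

lemma phi_int: assumes k: "k < N" shows "(\<integral>\<^sup>+t. ennreal (phi k t) \<partial>lborel) = 1"
proof -
  have eq: "(\<integral>\<^sup>+t. ennreal (phi k t) \<partial>lborel) = (\<integral>\<^sup>+t. ennreal (sh k t) * indicator (cell k) t \<partial>lborel)"
    by (intro nn_integral_cong) (auto simp: phi_def indicator_def)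
  consider "k = 0" | "k = N - 1" | "k \<noteq> 0" "k \<noteq> N - 1" by blast
  then show ?thesis
  proof cases
    case 1
    have "((\<lambda>t. cc * sqrt (t - a)) has_integral (cc * (2/3 * sqrt (a + h - a) ^ 3))) {a..a+h}"
      using h by (intro has_integral_mult_right sqrt_has_integral) auto
    moreover have "cc * (2/3 * sqrt (a + h - a) ^ 3) = 1"
      using h by (simp add: cc_def sqrt_h3 field_simps)
    ultimately have I: "((\<lambda>t. cc * sqrt (t - a)) has_integral 1) (cell k)"
      using 1 by (simp add: cell_def)
    have "(\<integral>\<^sup>+t. ennreal (sh k t) * indicator (cell k) t \<partial>lborel) = (\<integral>\<^sup>+t. ennreal (cc * sqrt (t - a)) * indicator (cell k) t \<partial>lborel)"
      using 1 by (simp add: sh_def)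
    also have "\<dots> = ennreal 1"
      using I cc_pos 1 by (intro nn_integral_has_integral_lebesgue') (auto simp: cell_def)
    finally show ?thesis using eq by simp
  next
    case 2
    then have k0: "k \<noteq> 0" using N by auto
    have "((\<lambda>t. cc * sqrt (b - t)) has_integral (cc * (2/3 * sqrt (b - (b - h)) ^ 3))) {b - h..b}"
      using h by (intro has_integral_mult_right sqrt_has_integral2) auto
    moreover have "cc * (2/3 * sqrt (b - (b - h)) ^ 3) = 1"
      using h by (simp add: cc_def sqrt_h3 field_simps)
    moreover have "cell k = {b - h..b}" using 2 N
      by (auto simp: cell_def b_def of_nat_diff algebra_simps)
    ultimately have I: "((\<lambda>t. cc * sqrt (b - t)) has_integral 1) (cell k)"
      by simp
    have "(\<integral>\<^sup>+t. ennreal (sh k t) * indicator (cell k) t \<partial>lborel) = (\<integral>\<^sup>+t. ennreal (cc * sqrt (b - t)) * indicator (cell k) t \<partial>lborel)"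
      using 2 k0 by (simp add: sh_def)
    also have "\<dots> = ennreal 1"
      using I cc_pos 2 N by (intro nn_integral_has_integral_lebesgue') (auto simp: cell_def b_def of_nat_diff algebra_simps)
    finally show ?thesis using eq by simp
  next
    case 3
    have "(\<integral>\<^sup>+t. ennreal (sh k t) * indicator (cell k) t \<partial>lborel) = (\<integral>\<^sup>+t. ennreal (1/h) * indicator (cell k) t \<partial>lborel)"
      using 3 by (simp add: sh_def)
    also have "\<dots> = ennreal (1/h) * emeasure lborel (cell k)"
      by (rule nn_integral_cmult_indicator) (simp add: cell_def)
    also have "emeasure lborel (cell k) = ennreal h"
      using h by (simp add: cell_def algebra_simps)
    also have "ennreal (1/h) * ennreal h = 1"
      using h by (simp add: ennreal_mult[symmetric])
    finally show ?thesis using eq by simp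
  qed
qed


lemma cell_sub: "k < N \<Longrightarrow> cell k \<subseteq> {a..b}"
proof -
  assume k: "k < N"
  then have "real (k + 1) \<le> real N" by simp
  then have "real (k + 1) * h \<le> real N * h" using h by (intro mult_right_mono) auto
  then show ?thesis using h by (auto simp: cell_def b_def)
qed

lemma rho_zero: "t \<notin> {a..b} \<Longrightarrow> rho t = 0"
proof -
  assume t: "t \<notin> {a..b}"
  have "phi k t = 0" if "k < N" for k using cell_sub[OF that] t by (auto simp: phi_def indicator_def)
  then show ?thesis by (simp add: rho_def)
qed

lemma mphi_nonneg: "k < N \<Longrightarrow> 0 \<le> m k * phi k t"
  using mpos[of k] phi_nonneg[of k t] by simp

definition "Gs s = (\<integral>\<^sup>+t. ennreal (rho t) * indicator {..s} t \<partial>lborel)"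

lemma split_int:
  assumes [measurable]: "A \<in> sets borel"
  shows "(\<integral>\<^sup>+t. ennreal (rho t) * indicator A t \<partial>lborel)
     = (\<Sum>k<N. ennreal (m k) * (\<integral>\<^sup>+t. ennreal (phi k t) * indicator A t \<partial>lborel))"
proof -
  have "(\<integral>\<^sup>+t. ennreal (rho t) * indicator A t \<partial>lborel)
     = (\<integral>\<^sup>+t. (\<Sum>k<N. ennreal (m k) * (ennreal (phi k t) * indicator A t)) \<partial>lborel)"
  proof (intro nn_integral_cong)
    fix t
    have "ennreal (rho t) = (\<Sum>k<N. ennreal (m k * phi k t))"
      unfolding rho_def using mphi_nonneg by (subst sum_ennreal) auto
    also have "\<dots> = (\<Sum>k<N. ennreal (m k) * ennreal (phi k t))"
      using mpos phi_nonneg by (intro sum.cong refl) (simp add: ennreal_mult less_imp_le)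
    finally show "ennreal (rho t) * indicator A t = (\<Sum>k<N. ennreal (m k) * (ennreal (phi k t) * indicator A t))"
      by (simp add: sum_distrib_right mult.assoc)
  qed
  also have "\<dots> = (\<Sum>k<N. (\<integral>\<^sup>+t. ennreal (m k) * (ennreal (phi k t) * indicator A t) \<partial>lborel))"
    by (rule nn_integral_sum) measurable
  also have "\<dots> = (\<Sum>k<N. ennreal (m k) * (\<integral>\<^sup>+t. ennreal (phi k t) * indicator A t \<partial>lborel))"
    by (intro sum.cong refl nn_integral_cmult) measurable
  finally show ?thesis .
qed

lemma phi_cut_lt:
  assumes "k < j" "j \<le> N"
  shows "(\<integral>\<^sup>+t. ennreal (phi k t) * indicator {..a + real j * h} t \<partial>lborel) = 1"
proof -
  have "real (k + 1) \<le> real j" using assms by simp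
  then have "real (k + 1) * h \<le> real j * h" using h by (intro mult_right_mono) auto
  then have "cell k \<subseteq> {..a + real j * h}" by (auto simp: cell_def)
  then have "(\<integral>\<^sup>+t. ennreal (phi k t) * indicator {..a + real j * h} t \<partial>lborel) = (\<integral>\<^sup>+t. ennreal (phi k t) \<partial>lborel)"
    by (intro nn_integral_cong) (auto simp: phi_def indicator_def)
  then show ?thesis using phi_int assms by simp
qed

lemma phi_cut_ge:
  assumes "j \<le> k"
  shows "(\<integral>\<^sup>+t. ennreal (phi k t) * indicator {..a + real j * h} t \<partial>lborel) = 0"
proof -
  have "real j * h \<le> real k * h" using h assms by (intro mult_right_mono) auto
  then have "ennreal (phi k t) * indicator {..a + real j * h} t = ennreal (phi k (a + real j * h)) * indicator {a + real j * h} t" for t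
  proof (cases "t \<in> cell k \<and> t \<le> a + real j * h")
    case True
    then have "t = a + real j * h" using \<open>real j * h \<le> real k * h\<close> by (auto simp: cell_def)
    then show ?thesis by simp
  next
    case False
    then show ?thesis by (auto simp: phi_def indicator_def)
  qed
  then have "(\<integral>\<^sup>+t. ennreal (phi k t) * indicator {..a + real j * h} t \<partial>lborel)
      = (\<integral>\<^sup>+t. ennreal (phi k (a + real j * h)) * indicator {a + real j * h} t \<partial>lborel)"
    by simp
  also have "\<dots> = 0" by (subst nn_integral_cmult_indicator) auto
  finally show ?thesis .
qed

lemma Gs_grid:
  assumes "j \<le> N"
  shows "Gs (a + real j * h) = (\<Sum>k<j. ennreal (m k))"
proof -
  have "Gs (a + real j * h) = (\<Sum>k<N. ennreal (m k) * (if k < j then 1 else 0))"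
    unfolding Gs_def using phi_cut_lt[OF _ assms] phi_cut_ge
    by (subst split_int) (auto intro!: sum.cong)
  also have "\<dots> = (\<Sum>k\<in>{k \<in> {..<N}. k < j}. ennreal (m k))"
    by (subst sum.inter_filter) (auto intro!: sum.cong)
  also have "{k \<in> {..<N}. k < j} = {..<j}" using assms by auto
  finally show ?thesis .
qed

lemma Gs_mono: "s \<le> s' \<Longrightarrow> Gs s \<le> Gs s'"
  unfolding Gs_def by (intro nn_integral_mono) (auto simp: indicator_def)

lemma Gs_low: "s < a \<Longrightarrow> Gs s = 0"
proof -
  assume "s < a"
  then have z: "ennreal (rho t) * indicator {..s} t = 0" for t using rho_zero[of t] by (auto simp: indicator_def)
  have "Gs s = (\<integral>\<^sup>+(t::real). 0 \<partial>lborel)" unfolding Gs_def by (rule nn_integral_cong) (rule z)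
  then show "Gs s = 0" by simp
qed

lemma total: "(\<integral>\<^sup>+t. ennreal (rho t) \<partial>lborel) = (\<Sum>k<N. ennreal (m k))"
proof -
  have "(\<integral>\<^sup>+t. ennreal (rho t) \<partial>lborel) = (\<integral>\<^sup>+t. ennreal (rho t) * indicator UNIV t \<partial>lborel)" by simp
  also have "\<dots> = (\<Sum>k<N. ennreal (m k) * (\<integral>\<^sup>+t. ennreal (phi k t) * indicator UNIV t \<partial>lborel))"
    by (rule split_int) simp
  also have "\<dots> = (\<Sum>k<N. ennreal (m k))" using phi_int by simp
  finally show ?thesis .
qed

lemma Gs_high: "s \<ge> b \<Longrightarrow> Gs s = (\<Sum>k<N. ennreal (m k))"
proof -
  assume "s \<ge> b"
  then have z: "ennreal (rho t) * indicator {..s} t = ennreal (rho t)" for t using rho_zero[of t] by (auto simp: indicator_def)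
  have "Gs s = (\<integral>\<^sup>+t. ennreal (rho t) \<partial>lborel)" unfolding Gs_def by (rule nn_integral_cong) (rule z)
  then show ?thesis using total by simp
qed

lemma levy:
  fixes M :: "real measure" and e :: real
  assumes sM: "sets M = sets borel" and e: "e \<ge> 0"
    and C1: "emeasure M {..<a} = 0"
    and C2: "(\<Sum>k<N. ennreal (m k)) = emeasure M UNIV"
    and C3: "\<And>k. k < N \<Longrightarrow> emeasure M {..<a + real (k+1) * h - e} \<le> (\<Sum>i<k. ennreal (m i))"
    and C4: "\<And>k. k < N \<Longrightarrow> (\<Sum>i<Suc k. ennreal (m i)) \<le> emeasure M {..a + real k * h + e}"
    and C5: "emeasure M UNIV \<le> emeasure M {..b}"
  shows "emeasure M {..s - e} \<le> Gs s \<and> Gs s \<le> emeasure M {..s + e}"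
proof -
  have [measurable_cong]: "sets M = sets borel" by (rule sM)
  have sp: "space M = UNIV" using sets_eq_imp_space_eq[OF sM] by simp
  have mono: "A \<subseteq> B \<Longrightarrow> B \<in> sets borel \<Longrightarrow> emeasure M A \<le> emeasure M B" for A B
    using sM by (intro emeasure_mono) auto
  consider "s < a" | "s \<ge> b" | "a \<le> s" "s < b" by linarith
  then show ?thesis
  proof cases
    case 1
    have "emeasure M {..s - e} \<le> emeasure M {..<a}" using 1 e by (intro mono) auto
    then show ?thesis using C1 Gs_low[OF 1] by simp
  next
    case 2
    have "emeasure M {..s - e} \<le> emeasure M UNIV" by (intro mono) auto
    moreover have "emeasure M {..b} \<le> emeasure M {..s + e}" using 2 e by (intro mono) auto
    ultimately show ?thesis using C2 C5 Gs_high[OF 2] by (metis order_trans)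
  next
    case 3
    define k where "k = nat \<lfloor>(s - a) / h\<rfloor>"
    have fl: "of_int \<lfloor>(s - a) / h\<rfloor> \<le> (s - a) / h" "(s - a) / h < of_int \<lfloor>(s - a) / h\<rfloor> + 1"
      by linarith+
    have nn: "\<lfloor>(s - a) / h\<rfloor> \<ge> 0" using 3 h by simp
    then have rk: "real k = of_int \<lfloor>(s - a) / h\<rfloor>" unfolding k_def by simp
    have q1: "real k \<le> (s - a) / h" using fl(1) rk by linarith
    have q2: "(s - a) / h < real k + 1" using fl(2) rk by linarith
    have k1: "real k * h \<le> s - a" using q1 h by (simp add: le_divide_eq)
    have k2: "s - a < (real k + 1) * h" using q2 h by (simp add: divide_less_eq)
    have "real k * h < real N * h" using k1 3 by (simp add: b_def)
    then have kN: "k < N" using h by simp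
    have "emeasure M {..s - e} \<le> emeasure M {..<a + real (k+1) * h - e}"
      using k2 by (intro mono) (auto simp: algebra_simps)
    also have "\<dots> \<le> (\<Sum>i<k. ennreal (m i))" by (rule C3[OF kN])
    also have "\<dots> = Gs (a + real k * h)" using Gs_grid[of k] kN by simp
    also have "\<dots> \<le> Gs s" using k1 by (intro Gs_mono) simp
    finally have L: "emeasure M {..s - e} \<le> Gs s" .
    have "Gs s \<le> Gs (a + real (Suc k) * h)" using k2 by (intro Gs_mono) (simp add: algebra_simps)
    also have "\<dots> = (\<Sum>i<Suc k. ennreal (m i))" using Gs_grid[of "Suc k"] kN by simp
    also have "\<dots> \<le> emeasure M {..a + real k * h + e}" by (rule C4[OF kN])
    also have "\<dots> \<le> emeasure M {..s + e}" using k1 by (intro mono) auto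
    finally show ?thesis using L by simp
  qed
qed


definition "w t = sqrt ((t - a) * (b - t))"
definition "k1 = min (cc / sqrt (real N * h)) (1 / (real N * h * h))"
definition "k2 = cc / sqrt h + 1 / (h * h)"

lemma k1_pos: "k1 > 0" using cc_pos h N by (simp add: k1_def)
lemma k2_pos: "k2 > 0" using cc_pos h by (simp add: k2_def add_pos_pos)

lemma w_nonneg: "t \<in> {a..b} \<Longrightarrow> w t \<ge> 0" by (simp add: w_def)

lemma sh_bounds:
  assumes k: "k < N" and t: "t \<in> cell k"
  shows "k1 * w t \<le> sh k t \<and> sh k t \<le> k2 * w t"
proof -
  have tc: "a + real k * h \<le> t" "t \<le> a + real (k + 1) * h" using t by (auto simp: cell_def)
  have wn: "w t \<ge> 0" using cell_sub[OF k] t w_nonneg by auto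
  have Nr: "real N \<ge> 2" using N by simp
  consider "k = 0" | "k = N - 1" | "k \<noteq> 0" "k \<noteq> N - 1" by blast
  then show ?thesis
  proof cases
    case 1
    have x: "0 \<le> t - a" and y2: "b - t \<le> real N * h"
      using tc 1 h Nr by (auto simp: b_def algebra_simps)
    have y1': "h \<le> b - t"
    proof -
      have "(real N - 1) * h \<ge> 1 * h" using Nr h by (intro mult_right_mono) auto
      then show ?thesis using tc 1 by (simp add: b_def algebra_simps)
    qed
    have ww: "w t = sqrt (t - a) * sqrt (b - t)" by (simp add: w_def real_sqrt_mult)
    note E = edge_bound[OF x y1' y2 h cc_pos]
    have shv: "sh k t = cc * sqrt (t - a)" using 1 by (simp add: sh_def)
    have "k1 * w t \<le> (cc / sqrt (real N * h)) * w t"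
      using wn by (intro mult_right_mono) (auto simp: k1_def)
    also have "\<dots> \<le> sh k t" using E(1) ww shv by simp
    finally have L: "k1 * w t \<le> sh k t" .
    have "sh k t \<le> (cc / sqrt h) * w t" using E(2) ww shv by simp
    also have "\<dots> \<le> k2 * w t" using wn h by (intro mult_right_mono) (auto simp: k2_def)
    finally show ?thesis using L by simp
  next
    case 2
    then have k0: "k \<noteq> 0" using N by auto
    have kk: "real (k + 1) = real N" using 2 N by simp
    have x: "0 \<le> b - t" using tc kk by (simp add: b_def)
    have y2: "t - a \<le> real N * h"
      using tc kk by (simp add: b_def)
    have y1': "h \<le> t - a"
    proof -
      have "real k \<ge> 1" using k0 by simp
      then have "real k * h \<ge> 1 * h" using h by (intro mult_right_mono) auto
      then show ?thesis using tc by simp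
    qed
    have ww: "w t = sqrt (b - t) * sqrt (t - a)" by (simp add: w_def real_sqrt_mult mult.commute)
    note E = edge_bound[OF x y1' y2 h cc_pos]
    have shv: "sh k t = cc * sqrt (b - t)" using 2 k0 by (simp add: sh_def)
    have "k1 * w t \<le> (cc / sqrt (real N * h)) * w t"
      using wn by (intro mult_right_mono) (auto simp: k1_def)
    also have "\<dots> \<le> sh k t" using E(1) ww shv by simp
    finally have L: "k1 * w t \<le> sh k t" .
    have "sh k t \<le> (cc / sqrt h) * w t" using E(2) ww shv by simp
    also have "\<dots> \<le> k2 * w t" using wn h by (intro mult_right_mono) (auto simp: k2_def)
    finally show ?thesis using L by simp
  next
    case 3
    have shv: "sh k t = 1 / h" using 3 by (simp add: sh_def)
    have "real k \<ge> 1" using 3 by simp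
    then have "real k * h \<ge> 1 * h" using h by (intro mult_right_mono) auto
    then have A1: "h \<le> t - a" using tc by simp
    have "k + 2 \<le> N" using 3 k by simp
    then have "real (k + 2) \<le> real N" by linarith
    then have "real (k + 2) * h \<le> real N * h" using h by (intro mult_right_mono) auto
    then have A2: "h \<le> b - t" using tc by (simp add: b_def algebra_simps)
    have A3: "t - a \<le> real N * h" "b - t \<le> real N * h"
      using A1 A2 h by (simp_all add: b_def algebra_simps)
    have "h * h \<le> (t - a) * (b - t)" using A1 A2 h by (intro mult_mono) auto
    then have wl: "h \<le> w t" unfolding w_def by (intro real_le_rsqrt) (simp add: power2_eq_square)
    have "(t - a) * (b - t) \<le> (real N * h) * (real N * h)" using A1 A2 A3 h by (intro mult_mono) auto
    then have wu: "w t \<le> real N * h" unfolding w_def using h by (intro real_le_lsqrt) (simp_all add: power2_eq_square)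
    have "k1 * w t \<le> (1 / (real N * h * h)) * w t"
      using wn by (intro mult_right_mono) (auto simp: k1_def)
    also have "\<dots> \<le> (1 / (real N * h * h)) * (real N * h)" using wu h N by (intro mult_left_mono) auto
    also have "\<dots> = sh k t" using shv h N by (simp add: field_simps)
    finally have L: "k1 * w t \<le> sh k t" .
    have "sh k t = (1 / (h * h)) * h" using shv h by (simp add: field_simps)
    also have "\<dots> \<le> (1 / (h * h)) * w t" using wl h by (intro mult_left_mono) auto
    also have "\<dots> \<le> k2 * w t" using wn h cc_pos by (intro mult_right_mono) (auto simp: k2_def)
    finally show ?thesis using L by simp
  qed
qed

lemma cell_exists:
  assumes "t \<in> {a..b}" shows "\<exists>k<N. t \<in> cell k"
proof (cases "t = b")
  case True
  have "real (N - 1 + 1) = real N" using N by simp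
  then have "t \<in> cell (N - 1)" using True h N by (auto simp: cell_def b_def of_nat_diff algebra_simps)
  then show ?thesis using N by (intro exI[of _ "N - 1"]) auto
next
  case False
  then have t: "a \<le> t" "t < b" using assms by auto
  define k where "k = nat \<lfloor>(t - a) / h\<rfloor>"
  have fl: "of_int \<lfloor>(t - a) / h\<rfloor> \<le> (t - a) / h" "(t - a) / h < of_int \<lfloor>(t - a) / h\<rfloor> + 1"
    by linarith+
  have nn: "\<lfloor>(t - a) / h\<rfloor> \<ge> 0" using t h by simp
  then have rk: "real k = of_int \<lfloor>(t - a) / h\<rfloor>" unfolding k_def by simp
  have q1: "real k \<le> (t - a) / h" using fl(1) rk by linarith
  have q2: "(t - a) / h < real k + 1" using fl(2) rk by linarith
  have k1: "real k * h \<le> t - a" using q1 h by (simp add: le_divide_eq)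
  have k2: "t - a < (real k + 1) * h" using q2 h by (simp add: divide_less_eq)
  have "real k * h < real N * h" using k1 t by (simp add: b_def)
  then have kN: "k < N" using h by simp
  have "t \<in> cell k" using k1 k2 by (auto simp: cell_def algebra_simps)
  then show ?thesis using kN by auto
qed

definition "mmin = Min (m ` {..<N})"
definition "mmax = Max (m ` {..<N})"

lemma mmin: "mmin > 0" "k < N \<Longrightarrow> mmin \<le> m k"
proof -
  have "0 \<in> {..<N}" using N by simp
  then have ne: "m ` {..<N} \<noteq> {}" by blast
  show "mmin > 0" unfolding mmin_def using ne mpos by (subst Min_gr_iff) auto
  show "k < N \<Longrightarrow> mmin \<le> m k" unfolding mmin_def by (rule Min_le) auto
qed

lemma mmax: "k < N \<Longrightarrow> m k \<le> mmax"
  unfolding mmax_def by (rule Max_ge) auto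

lemma rho_bounds:
  assumes t: "t \<in> {a..b}"
  shows "(mmin * k1) * w t \<le> rho t \<and> rho t \<le> (real N * mmax * k2) * w t"
proof
  obtain k where k: "k < N" "t \<in> cell k" using cell_exists[OF t] by auto
  have "(mmin * k1) * w t = mmin * (k1 * w t)" by simp
  also have "\<dots> \<le> m k * sh k t"
    using sh_bounds[OF k] mmin(1) mmin(2)[of k] k k1_pos w_nonneg[OF t] by (intro mult_mono) auto
  also have "\<dots> = m k * phi k t" using k by (simp add: phi_def)
  also have "\<dots> \<le> rho t" unfolding rho_def
    by (rule member_le_sum) (use k mphi_nonneg in auto)
  finally show "(mmin * k1) * w t \<le> rho t" .
  have "rho t \<le> (\<Sum>j<N. mmax * (k2 * w t))" unfolding rho_def
  proof (rule sum_mono)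
    fix j assume j: "j \<in> {..<N}"
    have "0 \<le> mmax * (k2 * w t)" using mmin(1) mmin(2)[of 0] mmax[of 0] N k2_pos w_nonneg[OF t]
      by (intro mult_nonneg_nonneg) auto
    moreover have "m j * sh j t \<le> mmax * (k2 * w t)" if "t \<in> cell j"
      using sh_bounds[of j t] that j mmax[of j] mpos[of j] sh_nonneg[of t j]
      by (intro mult_mono) auto
    ultimately show "m j * phi j t \<le> mmax * (k2 * w t)" by (auto simp: phi_def indicator_def)
  qed
  also have "\<dots> = (real N * mmax * k2) * w t" by simp
  finally show "rho t \<le> (real N * mmax * k2) * w t" .
qed

end




definition loc_ok :: "real measure \<Rightarrow> real \<Rightarrow> real \<Rightarrow> real \<Rightarrow> real \<Rightarrow> (real \<Rightarrow> real) \<Rightarrow> real \<Rightarrow> real \<Rightarrow> bool" where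
  "loc_ok M \<alpha> \<beta> \<delta> b \<rho> c C \<longleftrightarrow> \<beta> < b \<and> b \<le> \<beta> + \<delta> \<and> \<rho> \<in> borel_measurable borel \<and> (\<forall>t. 0 \<le> \<rho> t)
     \<and> (\<forall>t. t \<notin> {\<alpha>..b} \<longrightarrow> \<rho> t = 0) \<and> c > 0 \<and> C > 0
     \<and> (\<forall>t\<in>{\<alpha>..b}. c * sqrt ((t - \<alpha>) * (b - t)) \<le> \<rho> t \<and> \<rho> t \<le> C * sqrt ((t - \<alpha>) * (b - t)))
     \<and> (\<forall>s. emeasure M {..s - \<delta>} \<le> (\<integral>\<^sup>+t. ennreal (\<rho> t) * indicator {..s} t \<partial>lborel)
           \<and> (\<integral>\<^sup>+t. ennreal (\<rho> t) * indicator {..s} t \<partial>lborel) \<le> emeasure M {..s + \<delta>})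
     \<and> (\<integral>\<^sup>+t. ennreal (\<rho> t) \<partial>lborel) = emeasure M UNIV"

lemma concentrated:
  fixes M :: "real measure"
  assumes sM: "sets M = sets borel" and null: "emeasure M (UNIV - {\<alpha>..\<beta>}) = 0"
    and A: "A \<in> sets borel" "{\<alpha>..\<beta>} \<subseteq> A"
  shows "emeasure M UNIV \<le> emeasure M A"
proof -
  have "A \<union> (UNIV - {\<alpha>..\<beta>}) = UNIV" using A by auto
  then have "emeasure M UNIV \<le> emeasure M (A \<union> (UNIV - {\<alpha>..\<beta>}))"
    by simp
  also have "\<dots> \<le> emeasure M A + emeasure M (UNIV - {\<alpha>..\<beta>})"
    using sM A by (intro emeasure_subadditive) auto
  finally show ?thesis using null by simp
qed

lemma null_below:
  fixes M :: "real measure"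
  assumes sM: "sets M = sets borel" and null: "emeasure M (UNIV - {\<alpha>..\<beta>}) = 0"
    and A: "A \<in> sets borel" "A \<inter> {\<alpha>..\<beta>} = {}"
  shows "emeasure M A = 0"
proof -
  have "emeasure M A \<le> emeasure M (UNIV - {\<alpha>..\<beta>})"
    using sM A by (intro emeasure_mono) auto
  then show ?thesis using null by simp
qed

lemma (in grid) finish:
  fixes M :: "real measure"
  assumes sM: "sets M = sets borel"
    and null: "emeasure M (UNIV - {a..\<beta>}) = 0"
    and e: "0 \<le> e" "e \<le> \<delta>" and bb: "\<beta> < b" "b \<le> \<beta> + \<delta>"
    and C2: "(\<Sum>k<N. ennreal (m k)) = emeasure M UNIV"
    and C3: "\<And>k. k < N \<Longrightarrow> emeasure M {..<a + real (k+1) * h - e} \<le> (\<Sum>i<k. ennreal (m i))"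
    and C4: "\<And>k. k < N \<Longrightarrow> (\<Sum>i<Suc k. ennreal (m i)) \<le> emeasure M {..a + real k * h + e}"
  shows "loc_ok M a \<beta> \<delta> b rho (mmin * k1) (real N * mmax * k2)"
proof -
  have mono: "A \<subseteq> B \<Longrightarrow> B \<in> sets borel \<Longrightarrow> emeasure M A \<le> emeasure M B" for A B
    using sM by (intro emeasure_mono) auto
  have C1: "emeasure M {..<a} = 0" by (rule null_below[OF sM null]) auto
  have C5: "emeasure M UNIV \<le> emeasure M {..b}" using concentrated[OF sM null] bb by auto
  note L = levy[OF sM e(1) C1 C2 C3 C4 C5]
  have lev: "emeasure M {..s - \<delta>} \<le> Gs s \<and> Gs s \<le> emeasure M {..s + \<delta>}" for s
  proof -
    have "emeasure M {..s - \<delta>} \<le> emeasure M {..s - e}" using e by (intro mono) auto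
    moreover have "emeasure M {..s + e} \<le> emeasure M {..s + \<delta>}" using e by (intro mono) auto
    ultimately show ?thesis using L[of s] by (metis order_trans)
  qed
  have pos1: "mmin * k1 > 0" using mmin(1) k1_pos by simp
  have "m 0 > 0" using mpos N by simp
  then have "mmax > 0" using mmax[of 0] N by simp
  then have pos2: "real N * mmax * k2 > 0" using k2_pos N by simp
  show ?thesis unfolding loc_ok_def
    using bb rho_meas rho_nonneg rho_zero pos1 pos2 rho_bounds lev total C2
    by (auto simp: Gs_def w_def)
qed

lemma local_construction:
  fixes M :: "real measure"
  assumes sM: "sets M = sets borel" and fin: "finite_measure M"
    and ab: "\<alpha> \<le> \<beta>" and d: "\<delta> > 0"
    and null: "emeasure M (UNIV - {\<alpha>..\<beta>}) = 0"
    and pos: "\<alpha> < \<beta> \<Longrightarrow> (\<And>u v. \<alpha> \<le> u \<Longrightarrow> u < v \<Longrightarrow> v \<le> \<beta> \<Longrightarrow> emeasure M {u<..<v} > 0)"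
    and atom: "\<alpha> = \<beta> \<Longrightarrow> emeasure M {\<alpha>} > 0"
  shows "\<exists>b \<rho> c C. loc_ok M \<alpha> \<beta> \<delta> b \<rho> c C"
proof -
  interpret F: finite_measure M by (rule fin)
  have em: "emeasure M A = ennreal (measure M A)" for A by (rule F.emeasure_eq_measure)
  have conc: "emeasure M UNIV \<le> emeasure M A" if "A \<in> sets borel" "{\<alpha>..\<beta>} \<subseteq> A" for A
    using concentrated[OF sM null that] .
  have below: "emeasure M {..<\<alpha>} = 0" by (rule null_below[OF sM null]) auto
  have mono: "A \<subseteq> B \<Longrightarrow> B \<in> sets borel \<Longrightarrow> emeasure M A \<le> emeasure M B" for A B
    using sM by (intro emeasure_mono) auto
  have plus: "emeasure M A + emeasure M B = emeasure M (A \<union> B)" if "A \<in> sets borel" "B \<in> sets borel" "A \<inter> B = {}" for A B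
    using sM that by (intro plus_emeasure) auto
  show ?thesis
  proof (cases "\<alpha> < \<beta>")
    case True
    define L where "L = \<beta> - \<alpha>"
    have L: "L > 0" using True by (simp add: L_def)
    define N where "N = nat \<lceil>L / \<delta>\<rceil> + 2"
    have N2: "N \<ge> 2" by (simp add: N_def)
    have "real N \<ge> L / \<delta> + 2" unfolding N_def using L d by linarith
    then have NL: "L / \<delta> < real N - 1/2" by linarith
    have Np: "real N - 1/2 > 0" using N2 by simp
    define h where "h = L / (real N - 1/2)"
    have h: "h > 0" using L Np by (simp add: h_def)
    have hN: "h * (real N - 1/2) = L" using Np by (simp add: h_def)
    have hd: "h < \<delta>"
    proof -
      have "L < \<delta> * (real N - 1/2)" using NL d by (simp add: divide_less_eq mult.commute)
      then show ?thesis using Np by (simp add: h_def divide_less_eq mult.commute)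
    qed
    define b where "b = \<alpha> + real N * h"
    have bdef: "b = \<beta> + h / 2" using hN by (simp add: b_def L_def algebra_simps)
    define m where "m k = measure M {\<alpha> + real k * h ..< \<alpha> + real (k + 1) * h}" for k
    have mpos: "m k > 0" if k: "k < N" for k
    proof -
      define u where "u = \<alpha> + real k * h"
      define v where "v = min (\<alpha> + real (k + 1) * h) \<beta>"
      have "real k \<le> real N - 1" using k by linarith
      then have "real k * h \<le> (real N - 1) * h" using h by (intro mult_right_mono) auto
      also have "\<dots> < (real N - 1/2) * h" using h by (intro mult_strict_right_mono) auto
      finally have "u < \<beta>" using hN by (simp add: u_def L_def algebra_simps)
      moreover have "u < \<alpha> + real (k + 1) * h" using h by (simp add: u_def algebra_simps)
      ultimately have uv: "u < v" by (simp add: v_def)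
      have "\<alpha> \<le> u" using h by (simp add: u_def)
      then have "0 < emeasure M {u<..<v}" using pos[OF True] uv by (simp add: v_def)
      also have "\<dots> \<le> emeasure M {\<alpha> + real k * h ..< \<alpha> + real (k + 1) * h}"
        by (intro mono) (auto simp: u_def v_def)
      finally show ?thesis by (simp add: m_def em)
    qed
    interpret G: grid \<alpha> h N m using h N2 mpos by unfold_locales auto
    have Gb: "G.b = b" by (simp add: G.b_def b_def)
    have CL: "(\<Sum>k<j. ennreal (m k)) = emeasure M {\<alpha> ..< \<alpha> + real j * h}" for j
    proof (induction j)
      case 0
      then show ?case by simp
    next
      case (Suc j)
      have "(\<Sum>k<Suc j. ennreal (m k)) = emeasure M {\<alpha> ..< \<alpha> + real j * h} + emeasure M {\<alpha> + real j * h ..< \<alpha> + real (j + 1) * h}"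
        using Suc by (simp add: m_def em)
      also have "\<dots> = emeasure M ({\<alpha> ..< \<alpha> + real j * h} \<union> {\<alpha> + real j * h ..< \<alpha> + real (j + 1) * h})"
        by (rule plus) auto
      also have "{\<alpha> ..< \<alpha> + real j * h} \<union> {\<alpha> + real j * h ..< \<alpha> + real (j + 1) * h} = {\<alpha> ..< \<alpha> + real (Suc j) * h}"
      proof -
        have u: "\<alpha> \<le> \<alpha> + real j * h" "\<alpha> + real j * h \<le> \<alpha> + real (j + 1) * h" using h by (auto simp: algebra_simps)
        have "{\<alpha> ..< \<alpha> + real j * h} \<union> {\<alpha> + real j * h ..< \<alpha> + real (j + 1) * h} = {\<alpha> ..< \<alpha> + real (j + 1) * h}"
          using u by auto
        then show ?thesis by simp
      qed
      finally show ?case .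
    qed
    have CL2: "emeasure M {\<alpha> ..< x} = emeasure M {..<x}" if "\<alpha> \<le> x" for x
    proof -
      have "emeasure M {..<x} = emeasure M {..<\<alpha>} + emeasure M {\<alpha> ..< x}"
        using that by (subst plus) (auto intro!: arg_cong[where f="emeasure M"])
      then show ?thesis using below by simp
    qed
    have C2: "(\<Sum>k<N. ennreal (m k)) = emeasure M UNIV"
    proof -
      have "(\<Sum>k<N. ennreal (m k)) = emeasure M {\<alpha> ..< b}" using CL[of N] by (simp add: b_def)
      moreover have "emeasure M UNIV \<le> emeasure M {\<alpha> ..< b}" using bdef h by (intro conc) auto
      moreover have "emeasure M {\<alpha> ..< b} \<le> emeasure M UNIV" by (intro mono) auto
      ultimately show ?thesis by simp
    qed
    have C3: "emeasure M {..<\<alpha> + real (k+1) * h - h} \<le> (\<Sum>i<k. ennreal (m i))" if "k < N" for k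
    proof -
      have eq: "{..<\<alpha> + real (k+1) * h - h} = {..<\<alpha> + real k * h}" by (simp add: algebra_simps)
      show ?thesis unfolding eq using CL[of k] CL2[of "\<alpha> + real k * h"] h by simp
    qed
    have C4: "(\<Sum>i<Suc k. ennreal (m i)) \<le> emeasure M {..\<alpha> + real k * h + h}" if "k < N" for k
    proof -
      have "(\<Sum>i<Suc k. ennreal (m i)) = emeasure M {\<alpha> ..< \<alpha> + real (Suc k) * h}" by (rule CL)
      also have "\<dots> \<le> emeasure M {..\<alpha> + real k * h + h}" by (intro mono) (auto simp: algebra_simps)
      finally show ?thesis .
    qed
    have "loc_ok M \<alpha> \<beta> \<delta> G.b G.rho (G.mmin * G.k1) (real N * G.mmax * G.k2)"
      using G.finish[OF sM null[folded Gb] _ _ _ _ C2 C3 C4] h hd bdef Gb by auto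
    then show ?thesis by blast
  next
    case False
    then have ab': "\<alpha> = \<beta>" using ab by simp
    define h where "h = \<delta> / 4"
    have h: "h > 0" using d by (simp add: h_def)
    define p where "p = measure M UNIV"
    have "0 < emeasure M {\<alpha>}" by (rule atom[OF ab'])
    also have "\<dots> \<le> emeasure M UNIV" by (intro mono) auto
    finally have pp: "p > 0" by (simp add: p_def em)
    define m where "m k = p / 2" for k :: nat
    interpret G: grid \<alpha> h 2 m using h pp by unfold_locales (auto simp: m_def)
    have Gb: "G.b = \<alpha> + 2 * h" by (simp add: G.b_def)
    have C2: "(\<Sum>k<2. ennreal (m k)) = emeasure M UNIV"
    proof -
      have "(\<Sum>k<2. ennreal (m k)) = ennreal (p/2) + ennreal (p/2)" by (simp add: numeral_2_eq_2 m_def) (rule mult_2)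
      also have "\<dots> = ennreal p" using pp by (subst ennreal_plus[symmetric]) auto
      finally show ?thesis by (simp add: p_def em)
    qed
    have C3: "emeasure M {..<\<alpha> + real (k+1) * h - 2 * h} \<le> (\<Sum>i<k. ennreal (m i))" if "k < 2" for k
    proof -
      have "real (k + 1) \<le> 2" using that by simp
      then have "real (k+1) * h \<le> 2 * h" using h by (intro mult_right_mono) auto
      then have "emeasure M {..<\<alpha> + real (k+1) * h - 2 * h} \<le> emeasure M {..<\<alpha>}" by (intro mono) auto
      then show ?thesis using below by simp
    qed
    have C4: "(\<Sum>i<Suc k. ennreal (m i)) \<le> emeasure M {..\<alpha> + real k * h + 2 * h}" if "k < 2" for k
    proof -
      have "(\<Sum>i<Suc k. ennreal (m i)) \<le> (\<Sum>i<2. ennreal (m i))"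
        using that by (intro sum_mono2) auto
      also have "\<dots> \<le> emeasure M {..\<alpha> + real k * h + 2 * h}"
        unfolding C2 using h ab' by (intro conc) auto
      finally show ?thesis .
    qed
    have "loc_ok M \<alpha> \<beta> \<delta> G.b G.rho (G.mmin * G.k1) (real 2 * G.mmax * G.k2)"
      using G.finish[OF sM null _ _ _ _ C2 C3 C4] h ab' Gb by (auto simp: h_def)
    then show ?thesis by blast
  qed
qed




lemma support_pos:
  "t \<in> measure_support M \<Longrightarrow> open U \<Longrightarrow> t \<in> U \<Longrightarrow> emeasure M U > 0"
  unfolding measure_support_def by auto

lemma support_null:
  fixes \<mu> :: "real measure"
  assumes sM: "sets \<mu> = sets borel" and cl: "closed (measure_support \<mu>)"
  shows "emeasure \<mu> (UNIV - measure_support \<mu>) = 0"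
proof -
  define S where "S = measure_support \<mu>"
  define I where "I = {pq :: rat \<times> rat. emeasure \<mu> {real_of_rat (fst pq)<..<real_of_rat (snd pq)} = 0}"
  define B where "B pq = {real_of_rat (fst pq)<..<real_of_rat (snd pq)}" for pq :: "rat \<times> rat"
  have cover: "UNIV - S \<subseteq> (\<Union>pq\<in>I. B pq)"
  proof
    fix t assume "t \<in> UNIV - S"
    then obtain U where U: "open U" "t \<in> U" "\<not> emeasure \<mu> U > 0"
      unfolding S_def measure_support_def by auto
    then have U0: "emeasure \<mu> U = 0" by (simp add: not_gr_zero)
    obtain r where r: "r > 0" "\<And>y. dist y t < r \<Longrightarrow> y \<in> U"
      using U(1,2) unfolding open_dist by metis
    obtain p where p: "p \<in> \<rat>" "t - r < p" "p < t" using Rats_dense_in_real[of "t - r" t] r by auto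
    obtain q where q: "q \<in> \<rat>" "t < q" "q < t + r" using Rats_dense_in_real[of t "t + r"] r by auto
    obtain p' where p': "p = real_of_rat p'" using p(1) Rats_cases by blast
    obtain q' where q': "q = real_of_rat q'" using q(1) Rats_cases by blast
    have sub: "{p<..<q} \<subseteq> U"
    proof
      fix y assume "y \<in> {p<..<q}"
      then have "dist y t < r" using p q by (auto simp: dist_real_def)
      then show "y \<in> U" by (rule r(2))
    qed
    have "emeasure \<mu> {p<..<q} \<le> emeasure \<mu> U"
      using sub U(1) sM by (intro emeasure_mono) auto
    then have "emeasure \<mu> {p<..<q} = 0" using U0 by simp
    then have "(p', q') \<in> I" using p' q' by (simp add: I_def)
    moreover have "t \<in> B (p', q')" using p q p' q' by (simp add: B_def)
    ultimately show "t \<in> (\<Union>pq\<in>I. B pq)" by blast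
  qed
  have "(\<Union>pq\<in>I. B pq) \<in> null_sets \<mu>"
  proof (rule null_sets_UN')
    show "countable I" by (rule countable_subset[of _ UNIV]) auto
    fix pq assume "pq \<in> I"
    then show "B pq \<in> null_sets \<mu>" using sM by (auto simp: I_def B_def)
  qed
  moreover have "UNIV - S \<in> sets \<mu>" using cl sM by (auto simp: S_def)
  ultimately have "UNIV - S \<in> null_sets \<mu>" using cover by (rule null_sets_subset)
  then show ?thesis unfolding S_def by (simp add: null_sets_def)
qed

lemma comp_interval:
  fixes S :: "real set"
  assumes "compact S" "C \<in> components S"
  shows "C = {Inf C..Sup C} \<and> Inf C \<le> Sup C"
proof -
  have "connected C" "compact C" using assms in_components_connected compact_components by auto
  then obtain a b where ab: "C = {a..b}" using connected_compact_interval_1 by blast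
  have "C \<noteq> {}" using assms(2) in_components_nonempty by auto
  then have "a \<le> b" using ab by auto
  then show ?thesis using ab by simp
qed

lemma comp_atom:
  fixes \<mu> :: "real measure"
  assumes sM: "sets \<mu> = sets borel" and cp: "compact (measure_support \<mu>)"
    and fin: "finite (components (measure_support \<mu>))"
    and C: "{\<alpha>} \<in> components (measure_support \<mu>)"
    and null: "emeasure \<mu> (UNIV - measure_support \<mu>) = 0"
  shows "emeasure \<mu> {\<alpha>} > 0"
proof -
  define S where "S = measure_support \<mu>"
  define T where "T = \<Union>(components S - {{\<alpha>}})"
  have clS: "closed S" using cp compact_imp_closed by (auto simp: S_def)
  have clT: "closed T" unfolding T_def
    using fin clS closed_components by (intro closed_Union) (auto simp: S_def)
  have disj: "X \<inter> {\<alpha>} = {}" if "X \<in> components S" "X \<noteq> {\<alpha>}" for X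
    using components_nonoverlap[OF that(1) C[folded S_def]] that(2) by auto
  have aT: "\<alpha> \<notin> T" using disj unfolding T_def by auto
  have aS: "\<alpha> \<in> S" using C in_components_subset unfolding S_def by auto
  have "emeasure \<mu> (- T) > 0" using support_pos[of \<alpha> \<mu> "- T"] aS aT clT unfolding S_def by auto
  also have "emeasure \<mu> (- T) \<le> emeasure \<mu> ({\<alpha>} \<union> (UNIV - S))"
  proof (rule emeasure_mono)
    show "- T \<subseteq> {\<alpha>} \<union> (UNIV - S)"
    proof
      fix x assume x: "x \<in> - T"
      show "x \<in> {\<alpha>} \<union> (UNIV - S)"
      proof (cases "x \<in> S")
        case True
        then obtain X where "X \<in> components S" "x \<in> X" using Union_components[of S] by blast
        then show ?thesis using x unfolding T_def by auto
      qed auto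
    qed
    show "{\<alpha>} \<union> (UNIV - S) \<in> sets \<mu>" using sM clS by auto
  qed
  also have "\<dots> \<le> emeasure \<mu> {\<alpha>} + emeasure \<mu> (UNIV - S)"
    using sM clS by (intro emeasure_subadditive) auto
  finally show ?thesis using null by (simp add: S_def)
qed




theorem lemma2p2:
  fixes \<mu> :: "real measure" and n :: nat
  assumes "prob_space \<mu>"
    and "sets \<mu> = sets borel"
    and "compact (measure_support \<mu>)"
    and "finite (components (measure_support \<mu>))"
    and "card (components (measure_support \<mu>)) = n"
    and "\<epsilon> > 0"
  shows "\<exists>x y. x \<in> Linfty01 \<and> y \<in> Linfty01
      \<and> esssup (lebesgue_on {0<..<1}) (\<lambda>t. ereal \<bar>x t - y t\<bar>) < ereal \<epsilon>
      \<and> distr (lebesgue_on {0<..<1}) borel x = \<mu>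
      \<and> (\<exists>(a::nat \<Rightarrow> real) (b::nat \<Rightarrow> real) (\<rho>::real \<Rightarrow> real) (c::nat \<Rightarrow> real) (C::nat \<Rightarrow> real).
            (\<forall>j<n. a j < b j)
          \<and> (\<forall>i<n. \<forall>j<n. i \<noteq> j \<longrightarrow> {a i..b i} \<inter> {a j..b j} = {})
          \<and> emeasure (distr (lebesgue_on {0<..<1}) borel y)
              (UNIV - (\<Union>j<n. {a j..b j})) = 0
          \<and> distributed (lebesgue_on {0<..<1}) lborel y (\<lambda>t. ennreal (\<rho> t))
          \<and> (\<forall>j<n. c j > 0 \<and> C j > 0 \<and>
               (\<forall>t\<in>{a j..b j}.
                  c j * sqrt ((t - a j) * (b j - t)) \<le> \<rho> t
                \<and> \<rho> t \<le> C j * sqrt ((t - a j) * (b j - t)))))"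
proof -
  note PS = assms(1) and sM = assms(2) and cpS = assms(3) and finC = assms(4) and cardC = assms(5) and eps = assms(6)
  define S where "S = measure_support \<mu>"
  interpret P: prob_space \<mu> by (rule PS)
  have [measurable_cong]: "sets \<mu> = sets borel" by (rule sM)
  have spm: "space \<mu> = UNIV" using sets_eq_imp_space_eq[OF sM] by simp
  have RDmu: "real_distribution \<mu>"
    unfolding real_distribution_def real_distribution_axioms_def using PS sM by auto
  have clS: "closed S" using cpS compact_imp_closed by (simp add: S_def)
  have nullS: "emeasure \<mu> (UNIV - S) = 0" using support_null[OF sM] clS by (simp add: S_def)
  have SB: "S \<in> sets borel" using clS by simp
  have muS: "emeasure \<mu> S = 1"
  proof -
    have "emeasure \<mu> UNIV \<le> emeasure \<mu> S + emeasure \<mu> (UNIV - S)"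
      using sM SB by (intro order_trans[OF _ emeasure_subadditive]) (auto intro: emeasure_mono)
    moreover have "emeasure \<mu> S \<le> emeasure \<mu> UNIV" using sM SB by (intro emeasure_mono) auto
    ultimately show ?thesis using nullS P.emeasure_space_1 spm by (simp add: antisym)
  qed
  obtain K where bij: "bij_betw K {..<n} (components S)"
    using ex_bij_betw_nat_finite[OF finC] cardC by (auto simp: S_def atLeast0LessThan)
  have Kc: "j < n \<Longrightarrow> K j \<in> components S" for j using bij by (auto simp: bij_betw_def)
  define \<alpha> where "\<alpha> j = Inf (K j)" for j
  define \<beta> where "\<beta> j = Sup (K j)" for j
  have Kint: "K j = {\<alpha> j..\<beta> j}" "\<alpha> j \<le> \<beta> j" if "j < n" for j
    using comp_interval[OF cpS[folded S_def] Kc[OF that]] by (auto simp: \<alpha>_def \<beta>_def)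
  have Kdisj: "K i \<inter> K j = {}" if "i < n" "j < n" "i \<noteq> j" for i j
  proof -
    have "K i \<noteq> K j" using bij that by (auto simp: bij_betw_def inj_on_def)
    then show ?thesis using components_nonoverlap[OF Kc[OF that(1)] Kc[OF that(2)]] by auto
  qed
  have order: "\<beta> i < \<alpha> j \<or> \<beta> j < \<alpha> i" if "i < n" "j < n" "i \<noteq> j" for i j
  proof (rule ccontr)
    assume "\<not> (\<beta> i < \<alpha> j \<or> \<beta> j < \<alpha> i)"
    then have "max (\<alpha> i) (\<alpha> j) \<in> K i \<inter> K j" using Kint[OF that(1)] Kint[OF that(2)] by auto
    then show False using Kdisj[OF that] by auto
  qed
  define D where "D = (\<lambda>(i, j). \<alpha> j - \<beta> i) ` {(i, j). i < n \<and> j < n \<and> \<beta> i < \<alpha> j}"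
  have finD: "finite D"
  proof -
    have "{(i, j). i < n \<and> j < n \<and> \<beta> i < \<alpha> j} \<subseteq> {..<n} \<times> {..<n}" by auto
    then have "finite {(i, j). i < n \<and> j < n \<and> \<beta> i < \<alpha> j}" by (rule finite_subset) auto
    then show ?thesis by (simp add: D_def)
  qed
  define \<delta>0 where "\<delta>0 = Min (insert 1 D) / 2"
  have Dpos: "d \<in> D \<Longrightarrow> d > 0" for d by (auto simp: D_def)
  have d0: "\<delta>0 > 0" using finD Dpos by (simp add: \<delta>0_def)
  have d0gap: "\<beta> i + \<delta>0 < \<alpha> j" if "i < n" "j < n" "\<beta> i < \<alpha> j" for i j
  proof -
    have "\<alpha> j - \<beta> i \<in> D" using that by (auto simp: D_def)
    then have "Min (insert 1 D) \<le> \<alpha> j - \<beta> i" using finD by simp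
    moreover have "\<alpha> j - \<beta> i > 0" using that by simp
    ultimately show ?thesis by (simp add: \<delta>0_def)
  qed
  define \<delta> where "\<delta> = min (\<epsilon> / 2) \<delta>0"
  have dpos: "\<delta> > 0" using eps d0 by (simp add: \<delta>_def)
  have dle: "\<delta> \<le> \<delta>0" "\<delta> < \<epsilon>" using eps by (auto simp: \<delta>_def)
  define MM where "MM j = density \<mu> (indicator (K j))" for j
  have KB: "K j \<in> sets borel" if "j < n" for j using Kint[OF that] by simp
  have MMe: "emeasure (MM j) A = emeasure \<mu> (K j \<inter> A)" if "j < n" "A \<in> sets borel" for j A
    unfolding MM_def using sM KB[OF that(1)] that(2) by (intro emeasure_restricted) auto
  have MMs: "sets (MM j) = sets borel" for j by (simp add: MM_def sM)
  have loc: "\<exists>b \<rho> c C. loc_ok (MM j) (\<alpha> j) (\<beta> j) \<delta> b \<rho> c C" if j: "j < n" for j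
  proof (rule local_construction[OF MMs _ Kint(2)[OF j] dpos])
    have "emeasure (MM j) (space (MM j)) = emeasure \<mu> (K j)"
      using MMe[OF j, of UNIV] sets_eq_imp_space_eq[OF MMs[of j]] by simp
    then show "finite_measure (MM j)" by (intro finite_measureI) (simp add: P.emeasure_eq_measure)
    show "emeasure (MM j) (UNIV - {\<alpha> j..\<beta> j}) = 0"
      using MMe[OF j, of "UNIV - {\<alpha> j..\<beta> j}"] Kint[OF j] by simp
    show "emeasure (MM j) {u<..<v} > 0" if "\<alpha> j < \<beta> j" "\<alpha> j \<le> u" "u < v" "v \<le> \<beta> j" for u v
    proof -
      have "(u + v) / 2 \<in> K j" using that Kint[OF j] by auto
      then have "(u + v) / 2 \<in> S" using in_components_subset[OF Kc[OF j]] by auto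
      then have "emeasure \<mu> {u<..<v} > 0" using support_pos[of _ \<mu> "{u<..<v}"] that by (auto simp: S_def)
      moreover have "K j \<inter> {u<..<v} = {u<..<v}" using that Kint[OF j] by auto
      ultimately show ?thesis using MMe[OF j, of "{u<..<v}"] by simp
    qed
    show "emeasure (MM j) {\<alpha> j} > 0" if "\<alpha> j = \<beta> j"
    proof -
      have Kj: "K j = {\<alpha> j}" using that Kint[OF j] by simp
      have "emeasure \<mu> {\<alpha> j} > 0"
        using comp_atom[OF sM cpS finC _ nullS[unfolded S_def]] Kc[OF j] Kj by (simp add: S_def)
      then show ?thesis using MMe[OF j, of "{\<alpha> j}"] Kj by simp
    qed
  qed
  then have "\<forall>j. \<exists>b \<rho> c C. j < n \<longrightarrow> loc_ok (MM j) (\<alpha> j) (\<beta> j) \<delta> b \<rho> c C" by blast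
  then obtain bb rr cf Cf where LOC: "\<And>j. j < n \<Longrightarrow> loc_ok (MM j) (\<alpha> j) (\<beta> j) \<delta> (bb j) (rr j) (cf j) (Cf j)"
    by metis
  note LOCu = LOC[unfolded loc_ok_def]
  have rr_meas[measurable]: "j < n \<Longrightarrow> rr j \<in> borel_measurable borel" for j using LOCu by blast
  have rr_nn: "j < n \<Longrightarrow> 0 \<le> rr j t" for j t using LOCu by blast
  have rr_zero: "j < n \<Longrightarrow> t \<notin> {\<alpha> j..bb j} \<Longrightarrow> rr j t = 0" for j t using LOCu by blast
  have bbgt: "j < n \<Longrightarrow> \<beta> j < bb j" "j < n \<Longrightarrow> bb j \<le> \<beta> j + \<delta>" for j using LOCu by blast+
  have intdisj: "{\<alpha> i..bb i} \<inter> {\<alpha> j..bb j} = {}" if "i < n" "j < n" "i \<noteq> j" for i j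
  proof -
    have "bb i < \<alpha> j \<or> bb j < \<alpha> i"
    proof (cases "\<beta> i < \<alpha> j")
      case True
      then show ?thesis using d0gap[OF that(1,2) True] bbgt(2)[OF that(1)] dle by auto
    next
      case False
      then have "\<beta> j < \<alpha> i" using order[OF that] by auto
      then show ?thesis using d0gap[OF that(2,1)] bbgt(2)[OF that(2)] dle by auto
    qed
    then show ?thesis by auto
  qed
  define \<rho> where "\<rho> t = (\<Sum>j<n. rr j t)" for t
  have rho_meas[measurable]: "\<rho> \<in> borel_measurable borel" unfolding \<rho>_def by measurable
  have rho_nn: "0 \<le> \<rho> t" for t unfolding \<rho>_def by (rule sum_nonneg) (simp add: rr_nn)
  have rho_on: "\<rho> t = rr j t" if "j < n" "t \<in> {\<alpha> j..bb j}" for j t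
  proof -
    have "\<rho> t = (\<Sum>i\<in>{j}. rr i t)" unfolding \<rho>_def
    proof (rule sum.mono_neutral_right)
      show "\<forall>i\<in>{..<n} - {j}. rr i t = 0" using rr_zero intdisj that by blast
    qed (use that in auto)
    then show ?thesis by simp
  qed
  have rho_off: "\<rho> t = 0" if "t \<notin> (\<Union>j<n. {\<alpha> j..bb j})" for t
    unfolding \<rho>_def using rr_zero that by (auto intro!: sum.neutral)
  define \<nu> where "\<nu> = density lborel (\<lambda>t. ennreal (\<rho> t))"
  have snu: "sets \<nu> = sets borel" by (simp add: \<nu>_def)
  have spnu: "space \<nu> = UNIV" by (simp add: \<nu>_def)
  have nuA: "emeasure \<nu> A = (\<Sum>j<n. \<integral>\<^sup>+t. ennreal (rr j t) * indicator A t \<partial>lborel)" if A[measurable]: "A \<in> sets borel" for A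
  proof -
    have "emeasure \<nu> A = (\<integral>\<^sup>+t. ennreal (\<rho> t) * indicator A t \<partial>lborel)"
      unfolding \<nu>_def by (rule emeasure_density) auto
    also have "\<dots> = (\<integral>\<^sup>+t. (\<Sum>j<n. ennreal (rr j t) * indicator A t) \<partial>lborel)"
    proof (rule nn_integral_cong)
      fix t
      have "ennreal (\<rho> t) = (\<Sum>j<n. ennreal (rr j t))" unfolding \<rho>_def
        using rr_nn by (subst sum_ennreal) auto
      then show "ennreal (\<rho> t) * indicator A t = (\<Sum>j<n. ennreal (rr j t) * indicator A t)"
        by (simp add: sum_distrib_right)
    qed
    also have "\<dots> = (\<Sum>j<n. \<integral>\<^sup>+t. ennreal (rr j t) * indicator A t \<partial>lborel)"
      by (rule nn_integral_sum) measurable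
    finally show ?thesis .
  qed
  have UK: "(\<Union>j<n. K j) = S"
  proof -
    have "K ` {..<n} = components S" using bij by (simp add: bij_betw_def)
    then show ?thesis using Union_components[of S] by simp
  qed
  have disjK: "disjoint_family_on K {..<n}" using Kdisj by (auto simp: disjoint_family_on_def)
  have muSum: "emeasure \<mu> (S \<inter> A) = (\<Sum>j<n. emeasure (MM j) A)" if A: "A \<in> sets borel" for A
  proof -
    have "(\<Sum>j<n. emeasure (MM j) A) = (\<Sum>j<n. emeasure \<mu> (K j \<inter> A))"
      using MMe A by simp
    also have "\<dots> = emeasure \<mu> (\<Union>j<n. K j \<inter> A)"
      using disjK KB A sM by (intro sum_emeasure) (auto simp: disjoint_family_on_def)
    also have "(\<Union>j<n. K j \<inter> A) = S \<inter> A" using UK by auto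
    finally show ?thesis by simp
  qed
  have muA: "emeasure \<mu> A = emeasure \<mu> (S \<inter> A)" if A: "A \<in> sets borel" for A
  proof (rule antisym)
    have "emeasure \<mu> A \<le> emeasure \<mu> ((S \<inter> A) \<union> (UNIV - S))"
      by (rule emeasure_mono) (use A SB sM in auto)
    also have "\<dots> \<le> emeasure \<mu> (S \<inter> A) + emeasure \<mu> (UNIV - S)"
      by (rule emeasure_subadditive) (use A SB sM in auto)
    finally show "emeasure \<mu> A \<le> emeasure \<mu> (S \<inter> A)" using nullS by simp
    show "emeasure \<mu> (S \<inter> A) \<le> emeasure \<mu> A" using A SB sM by (intro emeasure_mono) auto
  qed
  have tot: "(\<integral>\<^sup>+t. ennreal (rr j t) * indicator UNIV t \<partial>lborel) = emeasure (MM j) UNIV" if "j < n" for j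
    using LOCu[OF that] by simp
  have nu1: "emeasure \<nu> UNIV = 1"
  proof -
    have "emeasure \<nu> UNIV = (\<Sum>j<n. emeasure (MM j) UNIV)" using nuA[of UNIV] tot by simp
    also have "\<dots> = emeasure \<mu> (S \<inter> UNIV)" using muSum[of UNIV] by simp
    finally show ?thesis using muS by simp
  qed
  interpret PN: prob_space \<nu> by (rule prob_spaceI) (simp add: spnu nu1)
  have RDnu: "real_distribution \<nu>"
    unfolding real_distribution_def real_distribution_axioms_def using PN.prob_space_axioms snu by auto
  have lev: "emeasure \<mu> {..s - \<delta>} \<le> emeasure \<nu> {..s} \<and> emeasure \<nu> {..s} \<le> emeasure \<mu> {..s + \<delta>}" for s
  proof -
    have "emeasure \<mu> {..s - \<delta>} = (\<Sum>j<n. emeasure (MM j) {..s - \<delta>})" using muA muSum by simp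
    also have "\<dots> \<le> (\<Sum>j<n. \<integral>\<^sup>+t. ennreal (rr j t) * indicator {..s} t \<partial>lborel)"
      using LOCu by (intro sum_mono) blast
    also have "\<dots> = emeasure \<nu> {..s}" using nuA by simp
    finally have 1: "emeasure \<mu> {..s - \<delta>} \<le> emeasure \<nu> {..s}" .
    have "emeasure \<nu> {..s} = (\<Sum>j<n. \<integral>\<^sup>+t. ennreal (rr j t) * indicator {..s} t \<partial>lborel)" using nuA by simp
    also have "\<dots> \<le> (\<Sum>j<n. emeasure (MM j) {..s + \<delta>})"
      using LOCu by (intro sum_mono) blast
    also have "\<dots> = emeasure \<mu> {..s + \<delta>}" using muA muSum by simp
    finally show ?thesis using 1 by simp
  qed
  have levr: "cdf \<mu> (s - \<delta>) \<le> cdf \<nu> s" "cdf \<nu> s \<le> cdf \<mu> (s + \<delta>)" for s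
    using lev[of s] by (simp_all add: cdf_def P.emeasure_eq_measure PN.emeasure_eq_measure ennreal_le_iff)
  define x where "x = quant (cdf \<mu>)"
  define y where "y = quant (cdf \<nu>)"
  have Fmu: "cdf_like (cdf \<mu>)" by (rule real_distribution_cdf_like[OF RDmu])
  have Fnu: "cdf_like (cdf \<nu>)" by (rule real_distribution_cdf_like[OF RDnu])
  have xm[measurable]: "x \<in> borel_measurable (lebesgue_on {0<..<1})" unfolding x_def by (rule quant_meas[OF Fmu])
  have ym[measurable]: "y \<in> borel_measurable (lebesgue_on {0<..<1})" unfolding y_def by (rule quant_meas[OF Fnu])
  have close: "\<bar>x t - y t\<bar> \<le> \<delta>" if "t \<in> {0<..<1}" for t
    unfolding x_def y_def using that dpos levr
    by (intro quant_close[OF Fmu Fnu]) auto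
  obtain B0 where B0: "\<And>z. z \<in> S \<Longrightarrow> \<bar>z\<bar> \<le> B0"
    using compact_imp_bounded[OF cpS] unfolding bounded_real S_def by blast
  have F1: "cdf \<mu> B0 = 1"
  proof -
    have "emeasure \<mu> S \<le> emeasure \<mu> {..B0}" using B0 sM by (intro emeasure_mono) force+
    then have "1 \<le> emeasure \<mu> {..B0}" using muS by simp
    then have "1 \<le> cdf \<mu> B0" by (simp add: cdf_def P.emeasure_eq_measure)
    then show ?thesis using P.prob_le_1[of "{..B0}"] by (simp add: cdf_def)
  qed
  have F0: "cdf \<mu> (- B0 - 1) = 0"
  proof -
    have "{..- B0 - 1} \<subseteq> UNIV - S" using B0 by force
    then have "emeasure \<mu> {..- B0 - 1} \<le> emeasure \<mu> (UNIV - S)" using SB sM by (intro emeasure_mono) auto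
    then have "emeasure \<mu> {..- B0 - 1} = 0" using nullS by simp
    then show ?thesis by (simp add: cdf_def P.emeasure_eq_measure)
  qed
  have xb: "\<bar>x t\<bar> \<le> B0 + 1" if t: "t \<in> {0<..<1}" for t
  proof -
    have t': "0 < t" "t < 1" using t by auto
    have "x t \<le> B0" unfolding x_def using cdf_like.quant_le_iff[OF Fmu t', of B0] F1 t' by simp
    moreover have "\<not> x t \<le> - B0 - 1" unfolding x_def using cdf_like.quant_le_iff[OF Fmu t', of "- B0 - 1"] F0 t' by simp
    ultimately show ?thesis by linarith
  qed
  have yb: "\<bar>y t\<bar> \<le> B0 + 1 + \<delta>" if t: "t \<in> {0<..<1}" for t
    using xb[OF t] close[OF t] by linarith
  have xL: "x \<in> Linfty01" unfolding Linfty01_def using xb by (auto intro!: exI[of _ "B0 + 1"] AE_I2)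
  have yL: "y \<in> Linfty01" unfolding Linfty01_def using yb by (auto intro!: exI[of _ "B0 + 1 + \<delta>"] AE_I2)
  have ess: "esssup (lebesgue_on {0<..<1}) (\<lambda>t. ereal \<bar>x t - y t\<bar>) < ereal \<epsilon>"
  proof -
    have "esssup (lebesgue_on {0<..<1}) (\<lambda>t. ereal \<bar>x t - y t\<bar>) \<le> ereal \<delta>"
      using close by (intro esssup_I) (auto intro!: AE_I2)
    also have "\<dots> < ereal \<epsilon>" using dle by simp
    finally show ?thesis .
  qed
  have dx: "distr (lebesgue_on {0<..<1}) borel x = \<mu>" unfolding x_def by (rule quant_distr[OF RDmu])
  have dy: "distr (lebesgue_on {0<..<1}) borel y = \<nu>" unfolding y_def by (rule quant_distr[OF RDnu])
  have dyl: "distr (lebesgue_on {0<..<1}) lborel y = \<nu>"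
    using dy by (subst distr_cong[of _ "lebesgue_on {0<..<1}" lborel borel y y]) auto
  have ex2: "emeasure (distr (lebesgue_on {0<..<1}) borel y) (UNIV - (\<Union>j<n. {\<alpha> j..bb j})) = 0"
  proof -
    have "emeasure \<nu> (UNIV - (\<Union>j<n. {\<alpha> j..bb j})) = (\<integral>\<^sup>+t. ennreal (\<rho> t) * indicator (UNIV - (\<Union>j<n. {\<alpha> j..bb j})) t \<partial>lborel)"
      unfolding \<nu>_def by (rule emeasure_density) auto
    also have "\<dots> = (\<integral>\<^sup>+(t::real). 0 \<partial>lborel)"
      using rho_off by (intro nn_integral_cong) (auto simp: indicator_def)
    finally show ?thesis using dy by simp
  qed
  have distd: "distributed (lebesgue_on {0<..<1}) lborel y (\<lambda>t. ennreal (\<rho> t))"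
    unfolding distributed_def using dyl by (auto simp: \<nu>_def)
  have bnds: "\<forall>j<n. cf j > 0 \<and> Cf j > 0 \<and>
               (\<forall>t\<in>{\<alpha> j..bb j}. cf j * sqrt ((t - \<alpha> j) * (bb j - t)) \<le> \<rho> t
                \<and> \<rho> t \<le> Cf j * sqrt ((t - \<alpha> j) * (bb j - t)))"
    using LOCu rho_on by auto
  have ab: "\<forall>j<n. \<alpha> j < bb j" using Kint(2) bbgt(1) by (meson order_le_less_trans)
  show ?thesis
    using xL yL ess dx ab intdisj ex2 distd bnds by blast
qed


end
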